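(* Let $(H,B_1,B_2)$ be a Rota-Baxter system of Hopf algebras and $A$ a unital commutative algebra. For every $(f_1,f_2)\in G_{\mathcal{B}_1,\mathcal{B}_2}$ we have $f_1\ast f_2^{\ast-1}\in\operatorname{Im}(\Psi)$.
   Context: $\mathbb{F}$ is a field of characteristic $0$; Sweedler notation $\Delta(a)=a_1\otimes a_2$. A Rota-Baxter system of Hopf algebras is a triple $(H,B_1,B_2)$ with $(H,\cdot,1,\Delta,\epsilon,S)$ a cocommutative Hopf algebra, $B_1,B_2$ coalgebra homomorphisms with $B_1(1)=B_2(1)=1$, and for all $a,b\in H$: $B_1(a)B_1(b)=B_1(B_1(a_1)bS(B_2(a_2)))$, $B_2(a)B_2(b)=B_2(B_1(a_1)bS(B_2(a_2)))$. Descendent operation $a\circ b=B_1(a_1)bS(B_2(a_2))$, cocycle $\sigma(a)=B_1(a_1)S(B_2(a_2))$, $H_1=\operatorname{Im}(\sigma)$; $H_{B_1,B_2}$ is the Hopf algebra $H_1$ with product $\circ$, unit $1$, restricted $\Delta,\epsilon$, antipode $T(a)=S(B_1(a_1))B_2(a_2)$. Convolution: $(f\ast g)(a)=f(a_1)g(a_2)$; $f^{\ast-1}$ is the convolution inverse. $\mathrm{Char}(H,A)$ is the group under $\ast$ of algebra homomorphisms $H\to A$; $\mathrm{Char}(H_{B_1,B_2},A)$ is the group under convolution (w.r.t. the coproduct of $H_1$) of algebra homomorphisms $(H_1,\circ,1)\to A$. Define $\mathcal{B}_i:\mathrm{Char}(H,A)\to\mathrm{Char}(H_{B_1,B_2},A)$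 by $\mathcal{B}_i(f)(a)=f(B_i(a))$ ($a\in H_1$, $i=1,2$) and $\Psi:\mathrm{Char}(H,A)\to\mathrm{Char}(H_{B_1,B_2},A)$ by $\Psi(f)=f|_{H_1}$. The Cayley transform $\Theta:\operatorname{Im}(\mathcal{B}_1)/\mathcal{B}_1(\ker\mathcal{B}_2)\to\operatorname{Im}(\mathcal{B}_2)/\mathcal{B}_2(\ker\mathcal{B}_1)$ is $\Theta(\overline{\mathcal{B}_1(f)})=\overline{\mathcal{B}_2(f)}$. $G_{\mathcal{B}_1,\mathcal{B}_2}=\{(f_1,f_2)\in\operatorname{Im}(\mathcal{B}_1)\times\operatorname{Im}(\mathcal{B}_2)\mid\Theta(\overline{f_1})=\overline{f_2}\}$. *)

theory Defs
  imports Complex_Main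
begin

text \<open>
  The Hopf algebra H is a type 'h of class ring_1 (its ring structure is the
  algebra multiplication and unit) made into an F-vector space by a scalar
  multiplication sc.

  An element of H (x) H is represented by a finite list of pairs
  (a finite sum of simple tensors); two such lists represent the same tensor
  iff every F-bilinear form H x H -> F takes the same value on them (bilinear
  forms separate points of H (x) H over a field).  Similarly for H (x) H (x) H
  with trilinear forms.  The coproduct is a function Delta giving, for each a,
  a representation of Delta(a); Sweedler sums a_1 (x) a_2 |-> beta(a_1,a_2) for
  bilinear beta are written tsum (Delta a) beta.
\<close>

definition tsum :: "('h \<times> 'h) list \<Rightarrow> ('h \<Rightarrow> 'h \<Rightarrow> 'b::comm_monoid_add) \<Rightarrow> 'b" where
  "tsum l \<beta> = sum_list (map (\<lambda>(u, v). \<beta> u v) l)"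

definition bilin_form :: "('f::field \<Rightarrow> 'h::ab_group_add \<Rightarrow> 'h) \<Rightarrow> ('h \<Rightarrow> 'h \<Rightarrow> 'f) \<Rightarrow> bool" where
  "bilin_form sc \<beta> \<longleftrightarrow>
     (\<forall>y. Vector_Spaces.linear sc ((*)) (\<lambda>x. \<beta> x y)) \<and> (\<forall>x. Vector_Spaces.linear sc ((*)) (\<beta> x))"

definition trilin_form :: "('f::field \<Rightarrow> 'h::ab_group_add \<Rightarrow> 'h) \<Rightarrow> ('h \<Rightarrow> 'h \<Rightarrow> 'h \<Rightarrow> 'f) \<Rightarrow> bool" where
  "trilin_form sc \<gamma> \<longleftrightarrow>
     (\<forall>y z. Vector_Spaces.linear sc ((*)) (\<lambda>x. \<gamma> x y z)) \<and>
     (\<forall>x z. Vector_Spaces.linear sc ((*)) (\<lambda>y. \<gamma> x y z)) \<and>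
     (\<forall>x y. Vector_Spaces.linear sc ((*)) (\<gamma> x y))"

definition teq2 :: "('f::field \<Rightarrow> 'h::ab_group_add \<Rightarrow> 'h) \<Rightarrow> ('h \<times> 'h) list \<Rightarrow> ('h \<times> 'h) list \<Rightarrow> bool" where
  "teq2 sc l1 l2 \<longleftrightarrow> (\<forall>\<beta>. bilin_form sc \<beta> \<longrightarrow> tsum l1 \<beta> = tsum l2 \<beta>)"

definition teq3 :: "('f::field \<Rightarrow> 'h::ab_group_add \<Rightarrow> 'h) \<Rightarrow> ('h \<times> 'h \<times> 'h) list \<Rightarrow> ('h \<times> 'h \<times> 'h) list \<Rightarrow> bool" where
  "teq3 sc l1 l2 \<longleftrightarrow> (\<forall>\<gamma>. trilin_form sc \<gamma> \<longrightarrow>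
      sum_list (map (\<lambda>(x, y, z). \<gamma> x y z) l1) = sum_list (map (\<lambda>(x, y, z). \<gamma> x y z) l2))"

definition coprod_left :: "('h \<Rightarrow> ('h \<times> 'h) list) \<Rightarrow> 'h \<Rightarrow> ('h \<times> 'h \<times> 'h) list" where
  "coprod_left \<Delta> x = concat (map (\<lambda>(u, v). map (\<lambda>(u1, u2). (u1, u2, v)) (\<Delta> u)) (\<Delta> x))"

definition coprod_right :: "('h \<Rightarrow> ('h \<times> 'h) list) \<Rightarrow> 'h \<Rightarrow> ('h \<times> 'h \<times> 'h) list" where
  "coprod_right \<Delta> x = concat (map (\<lambda>(u, v). map (\<lambda>(v1, v2). (u, v1, v2)) (\<Delta> v)) (\<Delta> x))"

definition hopf_algebra ::
  "('f::field \<Rightarrow> 'h::ring_1 \<Rightarrow> 'h) \<Rightarrow> ('h \<Rightarrow> ('h \<times> 'h) list) \<Rightarrow> ('h \<Rightarrow> 'f) \<Rightarrow> ('h \<Rightarrow> 'h) \<Rightarrow> bool" where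
  "hopf_algebra sc \<Delta> \<epsilon> S \<longleftrightarrow>
     Vector_Spaces.vector_space sc \<and>
     (\<forall>c x y. sc c (x * y) = sc c x * y \<and> sc c (x * y) = x * sc c y) \<and>
     (\<forall>x y. teq2 sc (\<Delta> (x + y)) (\<Delta> x @ \<Delta> y)) \<and>
     (\<forall>c x. teq2 sc (\<Delta> (sc c x)) (map (\<lambda>(u, v). (sc c u, v)) (\<Delta> x))) \<and>
     (\<forall>x. teq3 sc (coprod_left \<Delta> x) (coprod_right \<Delta> x)) \<and>
     Vector_Spaces.linear sc ((*)) \<epsilon> \<and>
     (\<forall>x. tsum (\<Delta> x) (\<lambda>u v. sc (\<epsilon> u) v) = x) \<and>
     (\<forall>x. tsum (\<Delta> x) (\<lambda>u v. sc (\<epsilon> v) u) = x) \<and>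
     (\<forall>x y. teq2 sc (\<Delta> (x * y)) [(u * u', v * v'). (u, v) \<leftarrow> \<Delta> x, (u', v') \<leftarrow> \<Delta> y]) \<and>
     teq2 sc (\<Delta> 1) [(1, 1)] \<and>
     (\<forall>x y. \<epsilon> (x * y) = \<epsilon> x * \<epsilon> y) \<and> \<epsilon> 1 = 1 \<and>
     Vector_Spaces.linear sc sc S \<and>
     (\<forall>x. tsum (\<Delta> x) (\<lambda>u v. S u * v) = sc (\<epsilon> x) 1) \<and>
     (\<forall>x. tsum (\<Delta> x) (\<lambda>u v. u * S v) = sc (\<epsilon> x) 1)"

definition cocommutative :: "('f::field \<Rightarrow> 'h::ab_group_add \<Rightarrow> 'h) \<Rightarrow> ('h \<Rightarrow> ('h \<times> 'h) list) \<Rightarrow> bool" where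
  "cocommutative sc \<Delta> \<longleftrightarrow> (\<forall>x. teq2 sc (\<Delta> x) (map (\<lambda>(u, v). (v, u)) (\<Delta> x)))"

definition coalg_hom ::
  "('f::field \<Rightarrow> 'h::ab_group_add \<Rightarrow> 'h) \<Rightarrow> ('h \<Rightarrow> ('h \<times> 'h) list) \<Rightarrow> ('h \<Rightarrow> 'f) \<Rightarrow> ('h \<Rightarrow> 'h) \<Rightarrow> bool" where
  "coalg_hom sc \<Delta> \<epsilon> B \<longleftrightarrow>
     Vector_Spaces.linear sc sc B \<and>
     (\<forall>x. teq2 sc (\<Delta> (B x)) (map (\<lambda>(u, v). (B u, B v)) (\<Delta> x))) \<and>
     (\<forall>x. \<epsilon> (B x) = \<epsilon> x)"

definition desc_op :: "('h \<Rightarrow> ('h \<times> 'h) list) \<Rightarrow> ('h \<Rightarrow> 'h) \<Rightarrow> ('h \<Rightarrow> 'h) \<Rightarrow> ('h \<Rightarrow> 'h) \<Rightarrow> 'h \<Rightarrow> 'h \<Rightarrow> 'h::ring_1" where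
  "desc_op \<Delta> S B1 B2 a b = tsum (\<Delta> a) (\<lambda>u v. B1 u * b * S (B2 v))"

definition cocycle :: "('h \<Rightarrow> ('h \<times> 'h) list) \<Rightarrow> ('h \<Rightarrow> 'h) \<Rightarrow> ('h \<Rightarrow> 'h) \<Rightarrow> ('h \<Rightarrow> 'h) \<Rightarrow> 'h \<Rightarrow> 'h::ring_1" where
  "cocycle \<Delta> S B1 B2 a = tsum (\<Delta> a) (\<lambda>u v. B1 u * S (B2 v))"

definition H1 :: "('h \<Rightarrow> ('h \<times> 'h) list) \<Rightarrow> ('h \<Rightarrow> 'h) \<Rightarrow> ('h \<Rightarrow> 'h) \<Rightarrow> ('h \<Rightarrow> 'h) \<Rightarrow> 'h::ring_1 set" where
  "H1 \<Delta> S B1 B2 = range (cocycle \<Delta> S B1 B2)"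

definition rota_baxter_system ::
  "('f::field_char_0 \<Rightarrow> 'h::ring_1 \<Rightarrow> 'h) \<Rightarrow> ('h \<Rightarrow> ('h \<times> 'h) list) \<Rightarrow> ('h \<Rightarrow> 'f) \<Rightarrow> ('h \<Rightarrow> 'h)
    \<Rightarrow> ('h \<Rightarrow> 'h) \<Rightarrow> ('h \<Rightarrow> 'h) \<Rightarrow> bool" where
  "rota_baxter_system sc \<Delta> \<epsilon> S B1 B2 \<longleftrightarrow>
     hopf_algebra sc \<Delta> \<epsilon> S \<and> cocommutative sc \<Delta> \<and>
     coalg_hom sc \<Delta> \<epsilon> B1 \<and> coalg_hom sc \<Delta> \<epsilon> B2 \<and> B1 1 = 1 \<and> B2 1 = 1 \<and>
     (\<forall>a b. B1 a * B1 b = B1 (desc_op \<Delta> S B1 B2 a b)) \<and>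
     (\<forall>a b. B2 a * B2 b = B2 (desc_op \<Delta> S B1 B2 a b))"

definition comm_algebra :: "('f::field \<Rightarrow> 'a::comm_ring_1 \<Rightarrow> 'a) \<Rightarrow> bool" where
  "comm_algebra scA \<longleftrightarrow> Vector_Spaces.vector_space scA \<and> (\<forall>c x y. scA c (x * y) = scA c x * y)"

definition CharH :: "('f::field \<Rightarrow> 'h::ring_1 \<Rightarrow> 'h) \<Rightarrow> ('f \<Rightarrow> 'a::comm_ring_1 \<Rightarrow> 'a) \<Rightarrow> ('h \<Rightarrow> 'a) set" where
  "CharH sc scA = {f. Vector_Spaces.linear sc scA f \<and> (\<forall>x y. f (x * y) = f x * f y) \<and> f 1 = 1}"

text \<open>Char(H_{B1,B2}, A): unital algebra homomorphisms (H1, \<circ>, 1) -> A.  They are represented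
  by functions on H whose values outside H1 are irrelevant.\<close>
definition CharH1 ::
  "('f::field \<Rightarrow> 'h::ring_1 \<Rightarrow> 'h) \<Rightarrow> ('f \<Rightarrow> 'a::comm_ring_1 \<Rightarrow> 'a) \<Rightarrow> ('h \<Rightarrow> ('h \<times> 'h) list) \<Rightarrow> ('h \<Rightarrow> 'h)
    \<Rightarrow> ('h \<Rightarrow> 'h) \<Rightarrow> ('h \<Rightarrow> 'h) \<Rightarrow> ('h \<Rightarrow> 'a) set" where
  "CharH1 sc scA \<Delta> S B1 B2 = {k.
     (\<forall>x\<in>H1 \<Delta> S B1 B2. \<forall>y\<in>H1 \<Delta> S B1 B2. k (x + y) = k x + k y) \<and>
     (\<forall>c. \<forall>x\<in>H1 \<Delta> S B1 B2. k (sc c x) = scA c (k x)) \<and>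
     (\<forall>x\<in>H1 \<Delta> S B1 B2. \<forall>y\<in>H1 \<Delta> S B1 B2. k (desc_op \<Delta> S B1 B2 x y) = k x * k y) \<and>
     k 1 = 1}"

text \<open>Convolution in Char(H_{B1,B2}, A): conv_H1 ... g k a val  means  (g * k)(a) = val, computed
  with a representation of Delta(a) inside H1 (x) H1 (the coproduct of H1 is the restriction of Delta).\<close>
definition conv_H1 ::
  "('f::field \<Rightarrow> 'h::ring_1 \<Rightarrow> 'h) \<Rightarrow> ('h \<Rightarrow> ('h \<times> 'h) list) \<Rightarrow> ('h \<Rightarrow> 'h) \<Rightarrow> ('h \<Rightarrow> 'h) \<Rightarrow> ('h \<Rightarrow> 'h)
    \<Rightarrow> ('h \<Rightarrow> 'a::comm_ring_1) \<Rightarrow> ('h \<Rightarrow> 'a) \<Rightarrow> 'h \<Rightarrow> 'a \<Rightarrow> bool" where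
  "conv_H1 sc \<Delta> S B1 B2 g k a val \<longleftrightarrow>
     (\<exists>rep. set rep \<subseteq> H1 \<Delta> S B1 B2 \<times> H1 \<Delta> S B1 B2 \<and> teq2 sc rep (\<Delta> a) \<and>
            val = tsum rep (\<lambda>u v. g u * k v))"

definition ImB ::
  "('f::field \<Rightarrow> 'h::ring_1 \<Rightarrow> 'h) \<Rightarrow> ('f \<Rightarrow> 'a::comm_ring_1 \<Rightarrow> 'a) \<Rightarrow> ('h \<Rightarrow> ('h \<times> 'h) list) \<Rightarrow> ('h \<Rightarrow> 'h)
    \<Rightarrow> ('h \<Rightarrow> 'h) \<Rightarrow> ('h \<Rightarrow> 'h) \<Rightarrow> ('h \<Rightarrow> 'h) \<Rightarrow> ('h \<Rightarrow> 'a) set" where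
  "ImB sc scA \<Delta> S B1 B2 B = {g. \<exists>f\<in>CharH sc scA. \<forall>a\<in>H1 \<Delta> S B1 B2. g a = f (B a)}"

definition kerB ::
  "('f::field \<Rightarrow> 'h::ring_1 \<Rightarrow> 'h) \<Rightarrow> ('f \<Rightarrow> 'a::comm_ring_1 \<Rightarrow> 'a) \<Rightarrow> ('h \<Rightarrow> ('h \<times> 'h) list) \<Rightarrow> ('h \<Rightarrow> 'f)
    \<Rightarrow> ('h \<Rightarrow> 'h) \<Rightarrow> ('h \<Rightarrow> 'h) \<Rightarrow> ('h \<Rightarrow> 'h) \<Rightarrow> ('h \<Rightarrow> 'h) \<Rightarrow> ('h \<Rightarrow> 'a) set" where
  "kerB sc scA \<Delta> \<epsilon> S B1 B2 B =
     {f\<in>CharH sc scA. \<forall>a\<in>H1 \<Delta> S B1 B2. f (B a) = scA (\<epsilon> a) 1}"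

text \<open>G_{\<B>_1,\<B>_2}: pairs (f1, f2) in Im(\<B>_1) x Im(\<B>_2) with \<Theta>(f1 bar) = f2 bar, where
  \<Theta>(\<B>_1(f) bar) = \<B>_2(f) bar, i.e. f1 = \<B>_1(f) and f2 \<in> \<B>_2(f) * \<B>_2(ker \<B>_1).\<close>
definition G_B ::
  "('f::field \<Rightarrow> 'h::ring_1 \<Rightarrow> 'h) \<Rightarrow> ('f \<Rightarrow> 'a::comm_ring_1 \<Rightarrow> 'a) \<Rightarrow> ('h \<Rightarrow> ('h \<times> 'h) list) \<Rightarrow> ('h \<Rightarrow> 'f)
    \<Rightarrow> ('h \<Rightarrow> 'h) \<Rightarrow> ('h \<Rightarrow> 'h) \<Rightarrow> ('h \<Rightarrow> 'h) \<Rightarrow> (('h \<Rightarrow> 'a) \<times> ('h \<Rightarrow> 'a)) set" where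
  "G_B sc scA \<Delta> \<epsilon> S B1 B2 = {(f1, f2).
     f1 \<in> ImB sc scA \<Delta> S B1 B2 B1 \<and> f2 \<in> ImB sc scA \<Delta> S B1 B2 B2 \<and>
     (\<exists>f\<in>CharH sc scA. (\<forall>a\<in>H1 \<Delta> S B1 B2. f1 a = f (B1 a)) \<and>
        (\<exists>h\<in>kerB sc scA \<Delta> \<epsilon> S B1 B2 B1. \<forall>a\<in>H1 \<Delta> S B1 B2.
            conv_H1 sc \<Delta> S B1 B2 (\<lambda>x. f (B2 x)) (\<lambda>x. h (B2 x)) a (f2 a)))}"

end

theory Submission
  imports Defs
begin


definition lin :: "('f::field \<Rightarrow> 'b::ab_group_add \<Rightarrow> 'b) \<Rightarrow> ('f \<Rightarrow> 'c::ab_group_add \<Rightarrow> 'c) \<Rightarrow> ('b \<Rightarrow> 'c) \<Rightarrow> bool" where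
  "lin s1 s2 g \<longleftrightarrow> (\<forall>x y. g (x + y) = g x + g y) \<and> (\<forall>c x. g (s1 c x) = s2 c (g x))"

lemma linear_iff_lin:
  "Vector_Spaces.linear s1 s2 g \<longleftrightarrow> vector_space s1 \<and> vector_space s2 \<and> lin s1 s2 g"
  unfolding Vector_Spaces.linear_def module_hom_def module_hom_axioms_def lin_def
    module_iff_vector_space by auto

lemma lin_add: "lin s1 s2 g \<Longrightarrow> g (x + y) = g x + g y" by (simp add: lin_def)
lemma lin_scale: "lin s1 s2 g \<Longrightarrow> g (s1 c x) = s2 c (g x)" by (simp add: lin_def)
lemma lin_zero: "lin s1 s2 g \<Longrightarrow> g 0 = 0"
  using lin_add[of s1 s2 g 0 0] by simp

lemma tsum_Nil[simp]: "tsum [] F = 0" by (simp add: tsum_def)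
lemma tsum_Cons[simp]: "tsum (p # l) F = F (fst p) (snd p) + tsum l F"
  by (simp add: tsum_def split_def)
lemma tsum_append[simp]: "tsum (l1 @ l2) F = tsum l1 F + tsum l2 F"
  by (simp add: tsum_def)

lemma tsum_cong: "(\<And>u v. (u, v) \<in> set l \<Longrightarrow> F u v = G u v) \<Longrightarrow> tsum l F = tsum l G"
  by (induction l) auto

lemma tsum_add: "tsum l (\<lambda>u v. F u v + G u v) = tsum l F + tsum l G"
  by (induction l) (auto simp: algebra_simps)

lemma tsum_zero: "tsum l (\<lambda>u v. 0) = 0"
  by (induction l) auto

lemma lin_tsum_pull: "lin s1 s2 g \<Longrightarrow> g (tsum l F) = tsum l (\<lambda>u v. g (F u v))"
  by (induction l) (auto simp: lin_add lin_zero)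

lemma tsum_swap:
  "tsum l1 (\<lambda>u v. tsum l2 (\<lambda>p q. F u v p q)) = tsum l2 (\<lambda>p q. tsum l1 (\<lambda>u v. F u v p q))"
proof (induction l1)
  case Nil then show ?case by (simp add: tsum_zero)
next
  case (Cons a l1) then show ?case by (simp add: tsum_add)
qed

lemma tsum_mult_right: "tsum l F * (c::'a::ring) = tsum l (\<lambda>u v. F u v * c)"
  by (induction l) (auto simp: algebra_simps)
lemma tsum_mult_left: "(c::'a::ring) * tsum l F = tsum l (\<lambda>u v. c * F u v)"
  by (induction l) (auto simp: algebra_simps)

lemma tsum_map: "tsum (map f l) F = tsum l (\<lambda>u v. F (fst (f (u, v))) (snd (f (u, v))))"
  by (induction l) auto

lemma tsum_concat_map:
  "tsum (concat (map g l)) F = tsum l (\<lambda>u v. tsum (g (u, v)) F)"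
  by (induction l) auto

lemma vs_scale_tsum: "vector_space s \<Longrightarrow> s c (tsum l F) = tsum l (\<lambda>u v. s c (F u v))"
proof -
  assume "vector_space s"
  then interpret vector_space s .
  show ?thesis by (induction l) (auto simp: scale_right_distrib)
qed

lemma vs_field: "vector_space ((*) :: 'f::field \<Rightarrow> 'f \<Rightarrow> 'f)"
  by unfold_locales (simp_all add: algebra_simps)

lemma separate:
  fixes s :: "'f::field \<Rightarrow> 'v::ab_group_add \<Rightarrow> 'v"
  assumes vs: "vector_space s"
    and H: "\<And>L::'v \<Rightarrow> 'f. lin s (*) L \<Longrightarrow> L a = L b"
  shows "a = b"
proof (rule ccontr)
  assume "a \<noteq> b"
  then have nz: "a - b \<noteq> 0" by simp
  have ind: "\<not> module.dependent s {a - b}"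
    using vector_space.dependent_single[OF vs] nz by simp
  interpret vp: vector_space_pair s "(*) :: 'f \<Rightarrow> 'f \<Rightarrow> 'f"
    using vs vs_field by (simp add: vector_space_pair_def)
  obtain g where g: "Vector_Spaces.linear s (*) g" "g (a - b) = (1::'f)"
    using vp.linear_independent_extend[OF ind, of "\<lambda>_. 1"] by auto
  then have lg: "lin s (*) g" by (simp add: linear_iff_lin)
  have "g (a - b) = g a - g b"
    using lin_add[OF lg, of "a - b" b] by simp
  with H[OF lg] g show False by simp
qed



definition bil :: "('f::field \<Rightarrow> 'b::ab_group_add \<Rightarrow> 'b) \<Rightarrow> ('f \<Rightarrow> 'c::ab_group_add \<Rightarrow> 'c) \<Rightarrow> ('b \<Rightarrow> 'b \<Rightarrow> 'c) \<Rightarrow> bool" where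
  "bil s1 s2 G \<longleftrightarrow> (\<forall>v. lin s1 s2 (\<lambda>u. G u v)) \<and> (\<forall>u. lin s1 s2 (\<lambda>v. G u v))"

definition tri :: "('f::field \<Rightarrow> 'b::ab_group_add \<Rightarrow> 'b) \<Rightarrow> ('f \<Rightarrow> 'c::ab_group_add \<Rightarrow> 'c) \<Rightarrow> ('b \<Rightarrow> 'b \<Rightarrow> 'b \<Rightarrow> 'c) \<Rightarrow> bool" where
  "tri s1 s2 G \<longleftrightarrow> (\<forall>y z. lin s1 s2 (\<lambda>x. G x y z)) \<and> (\<forall>x z. lin s1 s2 (\<lambda>y. G x y z)) \<and> (\<forall>x y. lin s1 s2 (\<lambda>z. G x y z))"

lemma bilI: "(\<And>v. lin s1 s2 (\<lambda>u. G u v)) \<Longrightarrow> (\<And>u. lin s1 s2 (\<lambda>v. G u v)) \<Longrightarrow> bil s1 s2 G"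
  by (simp add: bil_def)
lemma bilD1: "bil s1 s2 G \<Longrightarrow> lin s1 s2 (\<lambda>u. G u v)" by (simp add: bil_def)
lemma bilD2: "bil s1 s2 G \<Longrightarrow> lin s1 s2 (\<lambda>v. G u v)" by (simp add: bil_def)

lemma triI: "(\<And>y z. lin s1 s2 (\<lambda>x. G x y z)) \<Longrightarrow> (\<And>x z. lin s1 s2 (\<lambda>y. G x y z)) \<Longrightarrow> (\<And>x y. lin s1 s2 (\<lambda>z. G x y z)) \<Longrightarrow> tri s1 s2 G"
  by (simp add: tri_def)

lemma lin_id: "lin s s (\<lambda>x. x)" by (simp add: lin_def)

lemma lin_compI: "lin s2 s3 g \<Longrightarrow> lin s1 s2 F \<Longrightarrow> lin s1 s3 (\<lambda>x. g (F x))"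
  by (simp add: lin_def)

lemma lin_tsum_fun_vs: "vector_space s2 \<Longrightarrow> (\<And>u v. lin s1 s2 (\<lambda>x. G x u v)) \<Longrightarrow> lin s1 s2 (\<lambda>x. tsum l (G x))"
proof (induction l)
  case Nil
  then interpret vector_space s2 by simp
  show ?case by (simp add: lin_def)
next
  case (Cons a l)
  then interpret vector_space s2 by simp
  from Cons show ?case by (auto simp: lin_def algebra_simps scale_right_distrib)
qed

lemma lin_scale_fun: "vector_space s2 \<Longrightarrow> lin s1 s2 F \<Longrightarrow> lin s1 s2 (\<lambda>x. s2 c (F x))"
proof -
  assume "vector_space s2" "lin s1 s2 F"
  then interpret vector_space s2 by simp
  show ?thesis using \<open>lin s1 s2 F\<close> by (simp add: lin_def scale_right_distrib mult.commute)
qed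


locale CH =
  fixes sc :: "'f::field \<Rightarrow> 'h::ring_1 \<Rightarrow> 'h"
    and \<Delta> :: "'h \<Rightarrow> ('h \<times> 'h) list" and \<epsilon> :: "'h \<Rightarrow> 'f" and S :: "'h \<Rightarrow> 'h"
  assumes hopf: "hopf_algebra sc \<Delta> \<epsilon> S" and cocom: "cocommutative sc \<Delta>"
begin

lemma vsH: "vector_space sc" using hopf unfolding hopf_algebra_def by blast
lemma sc_multL: "sc c (x * y) = sc c x * y" using hopf unfolding hopf_algebra_def by blast
lemma sc_multR: "sc c (x * y) = x * sc c y" using hopf unfolding hopf_algebra_def by blast
lemma D_add: "teq2 sc (\<Delta> (x + y)) (\<Delta> x @ \<Delta> y)" using hopf unfolding hopf_algebra_def by blast
lemma D_scale: "teq2 sc (\<Delta> (sc c x)) (map (\<lambda>(u, v). (sc c u, v)) (\<Delta> x))" using hopf unfolding hopf_algebra_def by blast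
lemma D_coass: "teq3 sc (coprod_left \<Delta> x) (coprod_right \<Delta> x)" using hopf unfolding hopf_algebra_def by blast
lemma eps_lin: "lin sc (*) \<epsilon>" using hopf unfolding hopf_algebra_def linear_iff_lin by blast
lemma counitL: "tsum (\<Delta> x) (\<lambda>u v. sc (\<epsilon> u) v) = x" using hopf unfolding hopf_algebra_def by blast
lemma counitR: "tsum (\<Delta> x) (\<lambda>u v. sc (\<epsilon> v) u) = x" using hopf unfolding hopf_algebra_def by blast
lemma D_mult: "teq2 sc (\<Delta> (x * y)) [(u * u', v * v'). (u, v) \<leftarrow> \<Delta> x, (u', v') \<leftarrow> \<Delta> y]" using hopf unfolding hopf_algebra_def by blast
lemma D_one: "teq2 sc (\<Delta> 1) [(1, 1)]" using hopf unfolding hopf_algebra_def by blast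
lemma eps_mult: "\<epsilon> (x * y) = \<epsilon> x * \<epsilon> y" using hopf unfolding hopf_algebra_def by blast
lemma eps_one: "\<epsilon> 1 = 1" using hopf unfolding hopf_algebra_def by blast
lemma S_lin: "lin sc sc S" using hopf unfolding hopf_algebra_def linear_iff_lin by blast
lemma antiL: "tsum (\<Delta> x) (\<lambda>u v. S u * v) = sc (\<epsilon> x) 1" using hopf unfolding hopf_algebra_def by blast
lemma antiR: "tsum (\<Delta> x) (\<lambda>u v. u * S v) = sc (\<epsilon> x) 1" using hopf unfolding hopf_algebra_def by blast
lemma cocomD: "teq2 sc (\<Delta> x) (map (\<lambda>(u, v). (v, u)) (\<Delta> x))" using cocom by (simp add: cocommutative_def)

lemma T2:
  fixes sV :: "'f \<Rightarrow> 'v::ab_group_add \<Rightarrow> 'v"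
  assumes vs: "vector_space sV" and b: "bil sc sV G" and t: "teq2 sc l1 l2"
  shows "tsum l1 G = tsum l2 G"
proof (rule separate[OF vs])
  fix L :: "'v \<Rightarrow> 'f" assume L: "lin sV (*) L"
  have "bilin_form sc (\<lambda>u v. L (G u v))"
    unfolding bilin_form_def linear_iff_lin
    using vsH vs_field lin_compI[OF L bilD1[OF b]] lin_compI[OF L bilD2[OF b]] by auto
  then have "tsum l1 (\<lambda>u v. L (G u v)) = tsum l2 (\<lambda>u v. L (G u v))"
    using t by (simp add: teq2_def)
  then show "L (tsum l1 G) = L (tsum l2 G)"
    by (simp add: lin_tsum_pull[OF L])
qed

lemma sum_coprod_left:
  "sum_list (map (\<lambda>(x, y, z). g x y z) (concat (map (\<lambda>(u, v). map (\<lambda>(u1, u2). (u1, u2, v)) (\<Delta> u)) l)))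
   = tsum l (\<lambda>u v. tsum (\<Delta> u) (\<lambda>p q. g p q v))"
proof (induction l)
  case Nil then show ?case by simp
next
  case (Cons a l)
  have "sum_list (map (\<lambda>(x, y, z). g x y z) (map (\<lambda>(u1, u2). (u1, u2, v)) m)) = tsum m (\<lambda>p q. g p q v)" for m v
    by (induction m) auto
  with Cons show ?case by (auto simp: split_def)
qed

lemma sum_coprod_right:
  "sum_list (map (\<lambda>(x, y, z). g x y z) (concat (map (\<lambda>(u, v). map (\<lambda>(v1, v2). (u, v1, v2)) (\<Delta> v)) l)))
   = tsum l (\<lambda>u v. tsum (\<Delta> v) (\<lambda>p q. g u p q))"
proof (induction l)
  case Nil then show ?case by simp
next
  case (Cons a l)
  have "sum_list (map (\<lambda>(x, y, z). g x y z) (map (\<lambda>(v1, v2). (u, v1, v2)) m)) = tsum m (\<lambda>p q. g u p q)" for m u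
    by (induction m) auto
  with Cons show ?case by (auto simp: split_def)
qed

lemma coassoc:
  fixes sV :: "'f \<Rightarrow> 'v::ab_group_add \<Rightarrow> 'v"
  assumes vs: "vector_space sV" and t: "tri sc sV G"
  shows "tsum (\<Delta> x) (\<lambda>u v. tsum (\<Delta> u) (\<lambda>p q. G p q v)) = tsum (\<Delta> x) (\<lambda>u v. tsum (\<Delta> v) (\<lambda>p q. G u p q))"
proof (rule separate[OF vs])
  fix L :: "'v \<Rightarrow> 'f" assume L: "lin sV (*) L"
  have "trilin_form sc (\<lambda>a b c. L (G a b c))"
    using t unfolding trilin_form_def linear_iff_lin tri_def
    using vsH vs_field lin_compI[OF L] by blast
  then have "sum_list (map (\<lambda>(a, b, c). L (G a b c)) (coprod_left \<Delta> x)) =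
             sum_list (map (\<lambda>(a, b, c). L (G a b c)) (coprod_right \<Delta> x))"
    using D_coass[of x] by (simp add: teq3_def)
  then show "L (tsum (\<Delta> x) (\<lambda>u v. tsum (\<Delta> u) (\<lambda>p q. G p q v))) = L (tsum (\<Delta> x) (\<lambda>u v. tsum (\<Delta> v) (\<lambda>p q. G u p q)))"
    unfolding coprod_left_def coprod_right_def sum_coprod_left sum_coprod_right
    by (simp add: lin_tsum_pull[OF L])
qed

end


context CH
begin

lemma lin_multR: "lin s1 sc F \<Longrightarrow> lin s1 sc (\<lambda>x. F x * c)"
  by (simp add: lin_def sc_multL distrib_right)
lemma lin_multL: "lin s1 sc F \<Longrightarrow> lin s1 sc (\<lambda>x. c * F x)"
  by (simp add: lin_def sc_multR[symmetric] distrib_left)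

lemma lin_D:
  fixes sV :: "'f \<Rightarrow> 'v::ab_group_add \<Rightarrow> 'v"
  assumes vs: "vector_space sV" and b: "bil sc sV G"
  shows "lin sc sV (\<lambda>x. tsum (\<Delta> x) G)"
  unfolding lin_def
proof safe
  fix x y
  show "tsum (\<Delta> (x + y)) G = tsum (\<Delta> x) G + tsum (\<Delta> y) G"
    using T2[OF vs b D_add[of x y]] by simp
next
  fix c x
  have "tsum (\<Delta> (sc c x)) G = tsum (map (\<lambda>(u, v). (sc c u, v)) (\<Delta> x)) G"
    using T2[OF vs b D_scale[of c x]] .
  also have "\<dots> = tsum (\<Delta> x) (\<lambda>u v. G (sc c u) v)"
    by (simp add: tsum_map split_def)
  also have "\<dots> = tsum (\<Delta> x) (\<lambda>u v. sV c (G u v))"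
    using lin_scale[OF bilD1[OF b]] by simp
  also have "\<dots> = sV c (tsum (\<Delta> x) G)"
    by (simp add: vs_scale_tsum[OF vs])
  finally show "tsum (\<Delta> (sc c x)) G = sV c (tsum (\<Delta> x) G)" .
qed

lemma lin_DI:
  fixes sV :: "'f \<Rightarrow> 'v::ab_group_add \<Rightarrow> 'v"
  assumes vs: "vector_space sV" and F: "lin s1 sc F"
    and b1: "\<And>v. lin sc sV (\<lambda>u. G u v)" and b2: "\<And>u. lin sc sV (\<lambda>v. G u v)"
  shows "lin s1 sV (\<lambda>x. tsum (\<Delta> (F x)) G)"
  using lin_compI[OF lin_D[OF vs bilI[OF b1 b2]] F] .

lemma cocomm:
  fixes sV :: "'f \<Rightarrow> 'v::ab_group_add \<Rightarrow> 'v"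
  assumes vs: "vector_space sV" and b: "bil sc sV G"
  shows "tsum (\<Delta> x) G = tsum (\<Delta> x) (\<lambda>u v. G v u)"
  using T2[OF vs b cocomD[of x]] by (simp add: tsum_map split_def)

lemma counit1:
  fixes sV :: "'f \<Rightarrow> 'v::ab_group_add \<Rightarrow> 'v"
  assumes g: "lin sc sV g"
  shows "tsum (\<Delta> x) (\<lambda>u v. sV (\<epsilon> u) (g v)) = g x"
proof -
  have "g x = g (tsum (\<Delta> x) (\<lambda>u v. sc (\<epsilon> u) v))" by (simp add: counitL)
  also have "\<dots> = tsum (\<Delta> x) (\<lambda>u v. sV (\<epsilon> u) (g v))"
    by (simp add: lin_tsum_pull[OF g] lin_scale[OF g])
  finally show ?thesis by simp
qed

lemma counit2:
  fixes sV :: "'f \<Rightarrow> 'v::ab_group_add \<Rightarrow> 'v"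
  assumes g: "lin sc sV g"
  shows "tsum (\<Delta> x) (\<lambda>u v. sV (\<epsilon> v) (g u)) = g x"
proof -
  have "g x = g (tsum (\<Delta> x) (\<lambda>u v. sc (\<epsilon> v) u))" by (simp add: counitR)
  also have "\<dots> = tsum (\<Delta> x) (\<lambda>u v. sV (\<epsilon> v) (g u))"
    by (simp add: lin_tsum_pull[OF g] lin_scale[OF g])
  finally show ?thesis by simp
qed

lemma multD:
  fixes sV :: "'f \<Rightarrow> 'v::ab_group_add \<Rightarrow> 'v"
  assumes vs: "vector_space sV" and b: "bil sc sV G"
  shows "tsum (\<Delta> (x * y)) G = tsum (\<Delta> x) (\<lambda>u v. tsum (\<Delta> y) (\<lambda>u' v'. G (u * u') (v * v')))"
  using T2[OF vs b D_mult[of x y]]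
  by (simp add: tsum_concat_map tsum_map split_def)

lemma oneD:
  fixes sV :: "'f \<Rightarrow> 'v::ab_group_add \<Rightarrow> 'v"
  assumes vs: "vector_space sV" and b: "bil sc sV G"
  shows "tsum (\<Delta> 1) G = G 1 1"
  using T2[OF vs b D_one] by simp

lemma homD:
  fixes sV :: "'f \<Rightarrow> 'v::ab_group_add \<Rightarrow> 'v"
  assumes vs: "vector_space sV" and b: "bil sc sV G" and B: "coalg_hom sc \<Delta> \<epsilon> B"
  shows "tsum (\<Delta> (B x)) G = tsum (\<Delta> x) (\<lambda>u v. G (B u) (B v))"
proof -
  have "teq2 sc (\<Delta> (B x)) (map (\<lambda>(u, v). (B u, B v)) (\<Delta> x))"
    using B by (simp add: coalg_hom_def)
  from T2[OF vs b this] show ?thesis by (simp add: tsum_map split_def)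
qed

end


context CH
begin

lemma A4:
  fixes sV :: "'f \<Rightarrow> 'v::ab_group_add \<Rightarrow> 'v"
  assumes vs: "vector_space sV"
    and q1: "\<And>b c d. lin sc sV (\<lambda>a. \<delta> a b c d)" and q2: "\<And>a c d. lin sc sV (\<lambda>b. \<delta> a b c d)"
    and q3: "\<And>a b d. lin sc sV (\<lambda>c. \<delta> a b c d)" and q4: "\<And>a b c. lin sc sV (\<lambda>d. \<delta> a b c d)"
  shows "tsum (\<Delta> y) (\<lambda>u v. tsum (\<Delta> u) (\<lambda>a b. tsum (\<Delta> v) (\<lambda>c d. \<delta> a b c d)))
       = tsum (\<Delta> y) (\<lambda>u v. tsum (\<Delta> v) (\<lambda>p d. tsum (\<Delta> p) (\<lambda>b c. \<delta> u b c d)))"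
proof -
  have t1: "tri sc sV (\<lambda>p q v. tsum (\<Delta> v) (\<lambda>c d. \<delta> p q c d))"
    by (intro triI lin_tsum_fun_vs[OF vs] lin_DI[OF vs lin_id] q1 q2 q3 q4)
  have "tsum (\<Delta> y) (\<lambda>u v. tsum (\<Delta> u) (\<lambda>a b. tsum (\<Delta> v) (\<lambda>c d. \<delta> a b c d)))
      = tsum (\<Delta> y) (\<lambda>u v. tsum (\<Delta> v) (\<lambda>p q. tsum (\<Delta> q) (\<lambda>c d. \<delta> u p c d)))"
    using coassoc[OF vs t1] by simp
  also have "\<dots> = tsum (\<Delta> y) (\<lambda>u v. tsum (\<Delta> v) (\<lambda>p d. tsum (\<Delta> p) (\<lambda>b c. \<delta> u b c d)))"
  proof (rule tsum_cong)
    fix u v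
    have t2: "tri sc sV (\<lambda>b c d. \<delta> u b c d)"
      by (intro triI q2 q3 q4)
    show "tsum (\<Delta> v) (\<lambda>p q. tsum (\<Delta> q) (\<lambda>c d. \<delta> u p c d)) = tsum (\<Delta> v) (\<lambda>p d. tsum (\<Delta> p) (\<lambda>b c. \<delta> u b c d))"
      using coassoc[OF vs t2, of v] by simp
  qed
  finally show ?thesis .
qed

lemma Sw4:
  fixes sV :: "'f \<Rightarrow> 'v::ab_group_add \<Rightarrow> 'v"
  assumes vs: "vector_space sV"
    and q1: "\<And>b c d. lin sc sV (\<lambda>a. \<delta> a b c d)" and q2: "\<And>a c d. lin sc sV (\<lambda>b. \<delta> a b c d)"
    and q3: "\<And>a b d. lin sc sV (\<lambda>c. \<delta> a b c d)" and q4: "\<And>a b c. lin sc sV (\<lambda>d. \<delta> a b c d)"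
  shows "tsum (\<Delta> y) (\<lambda>u v. tsum (\<Delta> u) (\<lambda>a b. tsum (\<Delta> v) (\<lambda>c d. \<delta> a b c d)))
       = tsum (\<Delta> y) (\<lambda>u v. tsum (\<Delta> u) (\<lambda>a c. tsum (\<Delta> v) (\<lambda>b d. \<delta> a b c d)))"
proof -
  have "tsum (\<Delta> y) (\<lambda>u v. tsum (\<Delta> u) (\<lambda>a b. tsum (\<Delta> v) (\<lambda>c d. \<delta> a b c d)))
       = tsum (\<Delta> y) (\<lambda>u v. tsum (\<Delta> v) (\<lambda>p d. tsum (\<Delta> p) (\<lambda>b c. \<delta> u b c d)))"
    by (rule A4[OF vs q1 q2 q3 q4])
  also have "\<dots> = tsum (\<Delta> y) (\<lambda>u v. tsum (\<Delta> v) (\<lambda>p d. tsum (\<Delta> p) (\<lambda>b c. \<delta> u c b d)))"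
    by (intro tsum_cong cocomm[OF vs] bilI q2 q3)
  also have "\<dots> = tsum (\<Delta> y) (\<lambda>u v. tsum (\<Delta> u) (\<lambda>a c. tsum (\<Delta> v) (\<lambda>b d. \<delta> a b c d)))"
    by (rule A4[OF vs, of "\<lambda>a b c d. \<delta> a c b d", symmetric]) (auto intro: q1 q2 q3 q4)
  finally show ?thesis .
qed

end


context CH
begin

lemma lin_eps_scale:
  fixes sV :: "'f \<Rightarrow> 'v::ab_group_add \<Rightarrow> 'v"
  assumes vs: "vector_space sV"
  shows "lin sc sV (\<lambda>u. sV (\<epsilon> u) c0)"
proof -
  interpret vector_space sV by fact
  show ?thesis using eps_lin unfolding lin_def by (simp add: scale_left_distrib)
qed

lemma E1:
  fixes sV :: "'f \<Rightarrow> 'v::ab_group_add \<Rightarrow> 'v"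
  assumes vs: "vector_space sV" and b: "bil sc sV G"
  shows "tsum (\<Delta> x) (\<lambda>u v. tsum (\<Delta> (S u)) (\<lambda>p q. tsum (\<Delta> v) (\<lambda>p' q'. G (p * p') (q * q')))) = sV (\<epsilon> x) (G 1 1)"
proof -
  have g: "lin sc sV (\<lambda>z. tsum (\<Delta> z) G)" by (rule lin_D[OF vs b])
  have "tsum (\<Delta> x) (\<lambda>u v. tsum (\<Delta> (S u)) (\<lambda>p q. tsum (\<Delta> v) (\<lambda>p' q'. G (p * p') (q * q'))))
      = tsum (\<Delta> x) (\<lambda>u v. tsum (\<Delta> (S u * v)) G)"
    by (simp add: multD[OF vs b])
  also have "\<dots> = tsum (\<Delta> (tsum (\<Delta> x) (\<lambda>u v. S u * v))) G"
    by (simp add: lin_tsum_pull[OF g])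
  also have "\<dots> = sV (\<epsilon> x) (G 1 1)"
    by (simp add: antiL lin_scale[OF g] oneD[OF vs b])
  finally show ?thesis .
qed

lemma E2:
  fixes sV :: "'f \<Rightarrow> 'v::ab_group_add \<Rightarrow> 'v"
  assumes vs: "vector_space sV" and b: "bil sc sV G"
  shows "tsum (\<Delta> y) (\<lambda>u v. tsum (\<Delta> u) (\<lambda>a b. tsum (\<Delta> v) (\<lambda>c d. G (a * S c) (b * S d)))) = sV (\<epsilon> y) (G 1 1)"
proof -
  note L = lin_compI[OF bilD1[OF b]] lin_compI[OF bilD2[OF b]] lin_multR lin_multL lin_id lin_compI[OF S_lin]
  have "tsum (\<Delta> y) (\<lambda>u v. tsum (\<Delta> u) (\<lambda>a b. tsum (\<Delta> v) (\<lambda>c d. G (a * S c) (b * S d))))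
      = tsum (\<Delta> y) (\<lambda>u v. tsum (\<Delta> u) (\<lambda>a c. tsum (\<Delta> v) (\<lambda>b d. G (a * S c) (b * S d))))"
    by (rule Sw4[OF vs]) (intro L)+
  also have "\<dots> = tsum (\<Delta> y) (\<lambda>u v. sV (\<epsilon> v) (sV (\<epsilon> u) (G 1 1)))"
  proof (rule tsum_cong)
    fix u v
    have "tsum (\<Delta> u) (\<lambda>a c. tsum (\<Delta> v) (\<lambda>b d. G (a * S c) (b * S d)))
        = tsum (\<Delta> u) (\<lambda>a c. sV (\<epsilon> v) (G (a * S c) 1))"
    proof (rule tsum_cong)
      fix a c
      have "tsum (\<Delta> v) (\<lambda>b d. G (a * S c) (b * S d)) = G (a * S c) (tsum (\<Delta> v) (\<lambda>b d. b * S d))"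
        by (simp add: lin_tsum_pull[OF bilD2[OF b]])
      also have "\<dots> = sV (\<epsilon> v) (G (a * S c) 1)"
        by (simp add: antiR lin_scale[OF bilD2[OF b]])
      finally show "tsum (\<Delta> v) (\<lambda>b d. G (a * S c) (b * S d)) = sV (\<epsilon> v) (G (a * S c) 1)" .
    qed
    also have "\<dots> = sV (\<epsilon> v) (G (tsum (\<Delta> u) (\<lambda>a c. a * S c)) 1)"
      by (simp add: lin_tsum_pull[OF bilD1[OF b]] vs_scale_tsum[OF vs])
    also have "\<dots> = sV (\<epsilon> v) (sV (\<epsilon> u) (G 1 1))"
      by (simp add: antiR lin_scale[OF bilD1[OF b]])
    finally show "tsum (\<Delta> u) (\<lambda>a c. tsum (\<Delta> v) (\<lambda>b d. G (a * S c) (b * S d))) = sV (\<epsilon> v) (sV (\<epsilon> u) (G 1 1))" .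
  qed
  also have "\<dots> = sV (\<epsilon> y) (G 1 1)"
    by (rule counit2[OF lin_eps_scale[OF vs]])
  finally show ?thesis .
qed

end


context CH
begin

lemma antipode_D:
  fixes sV :: "'f \<Rightarrow> 'v::ab_group_add \<Rightarrow> 'v"
  assumes vs: "vector_space sV" and b: "bil sc sV G"
  shows "tsum (\<Delta> (S x)) G = tsum (\<Delta> x) (\<lambda>u v. G (S u) (S v))"
proof -
  note L = lin_compI[OF bilD1[OF b]] lin_compI[OF bilD2[OF b]] lin_multR lin_multL lin_id
     lin_compI[OF S_lin] S_lin lin_tsum_fun_vs[OF vs] lin_DI[OF vs] lin_scale_fun[OF vs] bilI
  define U where "U z = tsum (\<Delta> z) (\<lambda>u v. G (S u) (S v))" for z
  define T where "T z = tsum (\<Delta> (S z)) G" for z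
  have linU: "lin sc sV U" unfolding U_def by (intro L)+
  have linT: "lin sc sV T" unfolding T_def by (intro L)+
  have "U x = tsum (\<Delta> x) (\<lambda>u v. sV (\<epsilon> u) (U v))"
    by (rule counit1[OF linU, symmetric])
  also have "\<dots> = tsum (\<Delta> x) (\<lambda>u v. tsum (\<Delta> v) (\<lambda>v1 v2. tsum (\<Delta> u) (\<lambda>u1 u2.
       tsum (\<Delta> (S u1)) (\<lambda>p q. tsum (\<Delta> u2) (\<lambda>p' q'. G (p * p' * S v1) (q * q' * S v2))))))"
  proof (rule tsum_cong)
    fix u v
    have "sV (\<epsilon> u) (G (S v1) (S v2)) = tsum (\<Delta> u) (\<lambda>u1 u2.
       tsum (\<Delta> (S u1)) (\<lambda>p q. tsum (\<Delta> u2) (\<lambda>p' q'. G (p * p' * S v1) (q * q' * S v2))))" for v1 v2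
    proof -
      have bb: "bil sc sV (\<lambda>p q. G (p * S v1) (q * S v2))" by (intro L)+
      show ?thesis using E1[OF vs bb, of u] by (simp add: mult.assoc)
    qed
    then show "sV (\<epsilon> u) (U v) = tsum (\<Delta> v) (\<lambda>v1 v2. tsum (\<Delta> u) (\<lambda>u1 u2.
       tsum (\<Delta> (S u1)) (\<lambda>p q. tsum (\<Delta> u2) (\<lambda>p' q'. G (p * p' * S v1) (q * q' * S v2)))))"
      unfolding U_def by (simp add: vs_scale_tsum[OF vs])
  qed
  also have "\<dots> = tsum (\<Delta> x) (\<lambda>u v. tsum (\<Delta> u) (\<lambda>u1 u2. tsum (\<Delta> v) (\<lambda>v1 v2.
       tsum (\<Delta> (S u1)) (\<lambda>p q. tsum (\<Delta> u2) (\<lambda>p' q'. G (p * p' * S v1) (q * q' * S v2))))))"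
    by (rule tsum_cong) (rule tsum_swap)
  also have "\<dots> = tsum (\<Delta> x) (\<lambda>u v. tsum (\<Delta> v) (\<lambda>a b. tsum (\<Delta> b) (\<lambda>v1 v2.
       tsum (\<Delta> (S u)) (\<lambda>p q. tsum (\<Delta> a) (\<lambda>p' q'. G (p * p' * S v1) (q * q' * S v2))))))"
  proof (rule coassoc[OF vs])
    show "tri sc sV (\<lambda>u1 u2 v. tsum (\<Delta> v) (\<lambda>v1 v2.
       tsum (\<Delta> (S u1)) (\<lambda>p q. tsum (\<Delta> u2) (\<lambda>p' q'. G (p * p' * S v1) (q * q' * S v2)))))"
      by (intro triI L)+
  qed
  also have "\<dots> = tsum (\<Delta> x) (\<lambda>u v. tsum (\<Delta> (S u)) (\<lambda>p q. tsum (\<Delta> v) (\<lambda>a b. tsum (\<Delta> a) (\<lambda>p' q'.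
       tsum (\<Delta> b) (\<lambda>v1 v2. G (p * (p' * S v1)) (q * (q' * S v2)))))))"
  proof (rule tsum_cong)
    fix u v
    have "tsum (\<Delta> b) (\<lambda>v1 v2. tsum (\<Delta> (S u)) (\<lambda>p q. tsum (\<Delta> a) (\<lambda>p' q'. G (p * p' * S v1) (q * q' * S v2))))
       = tsum (\<Delta> (S u)) (\<lambda>p q. tsum (\<Delta> a) (\<lambda>p' q'. tsum (\<Delta> b) (\<lambda>v1 v2. G (p * (p' * S v1)) (q * (q' * S v2)))))" for a b
    proof -
      have "tsum (\<Delta> b) (\<lambda>v1 v2. tsum (\<Delta> (S u)) (\<lambda>p q. tsum (\<Delta> a) (\<lambda>p' q'. G (p * p' * S v1) (q * q' * S v2))))
         = tsum (\<Delta> (S u)) (\<lambda>p q. tsum (\<Delta> b) (\<lambda>v1 v2. tsum (\<Delta> a) (\<lambda>p' q'. G (p * p' * S v1) (q * q' * S v2))))"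
        by (rule tsum_swap)
      also have "\<dots> = tsum (\<Delta> (S u)) (\<lambda>p q. tsum (\<Delta> a) (\<lambda>p' q'. tsum (\<Delta> b) (\<lambda>v1 v2. G (p * p' * S v1) (q * q' * S v2))))"
        by (rule tsum_cong) (rule tsum_swap)
      finally show ?thesis by (simp add: mult.assoc)
    qed
    then show "tsum (\<Delta> v) (\<lambda>a b. tsum (\<Delta> b) (\<lambda>v1 v2. tsum (\<Delta> (S u)) (\<lambda>p q. tsum (\<Delta> a) (\<lambda>p' q'. G (p * p' * S v1) (q * q' * S v2)))))
      = tsum (\<Delta> (S u)) (\<lambda>p q. tsum (\<Delta> v) (\<lambda>a b. tsum (\<Delta> a) (\<lambda>p' q'. tsum (\<Delta> b) (\<lambda>v1 v2. G (p * (p' * S v1)) (q * (q' * S v2))))))"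
      by (simp add: tsum_swap[of "\<Delta> v" "\<Delta> (S u)"])
  qed
  also have "\<dots> = tsum (\<Delta> x) (\<lambda>u v. tsum (\<Delta> (S u)) (\<lambda>p q. sV (\<epsilon> v) (G p q)))"
  proof (intro tsum_cong)
    fix u v p q
    have bb: "bil sc sV (\<lambda>a b. G (p * a) (q * b))" by (intro L)+
    show "tsum (\<Delta> v) (\<lambda>a b. tsum (\<Delta> a) (\<lambda>p' q'. tsum (\<Delta> b) (\<lambda>v1 v2. G (p * (p' * S v1)) (q * (q' * S v2))))) = sV (\<epsilon> v) (G p q)"
      using E2[OF vs bb, of v] by simp
  qed
  also have "\<dots> = tsum (\<Delta> x) (\<lambda>u v. sV (\<epsilon> v) (T u))"
    unfolding T_def by (simp add: vs_scale_tsum[OF vs])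
  also have "\<dots> = T x" by (rule counit2[OF linT])
  finally show ?thesis unfolding U_def T_def ..
qed

end


locale RB = CH sc \<Delta> \<epsilon> S
  for sc :: "'f::field \<Rightarrow> 'h::ring_1 \<Rightarrow> 'h" and \<Delta> \<epsilon> S +
  fixes B1 B2 :: "'h \<Rightarrow> 'h"
  assumes hom1: "coalg_hom sc \<Delta> \<epsilon> B1" and hom2: "coalg_hom sc \<Delta> \<epsilon> B2"
    and RB1: "\<And>a b. B1 a * B1 b = B1 (desc_op \<Delta> S B1 B2 a b)"
    and RB2: "\<And>a b. B2 a * B2 b = B2 (desc_op \<Delta> S B1 B2 a b)"
    and B1one: "B1 1 = 1" and B2one: "B2 1 = 1"
begin

abbreviation "\<sigma> \<equiv> cocycle \<Delta> S B1 B2"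

lemma B1_lin: "lin sc sc B1" using hom1 by (simp add: coalg_hom_def linear_iff_lin)
lemma B2_lin: "lin sc sc B2" using hom2 by (simp add: coalg_hom_def linear_iff_lin)
lemma eps_B1: "\<epsilon> (B1 x) = \<epsilon> x" using hom1 by (simp add: coalg_hom_def)
lemma eps_B2: "\<epsilon> (B2 x) = \<epsilon> x" using hom2 by (simp add: coalg_hom_def)

lemma desc_one: "desc_op \<Delta> S B1 B2 a 1 = \<sigma> a"
  by (simp add: desc_op_def cocycle_def)

lemma B1_sigma: "B1 (\<sigma> a) = B1 a"
  using RB1[of a 1] by (simp add: desc_one B1one)
lemma B2_sigma: "B2 (\<sigma> a) = B2 a"
  using RB2[of a 1] by (simp add: desc_one B2one)

lemmas LH = lin_multR lin_multL lin_id lin_compI[OF S_lin] S_lin lin_compI[OF B1_lin] B1_lin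
   lin_compI[OF B2_lin] B2_lin bilI

lemma sigma_lin: "lin sc sc \<sigma>"
  unfolding cocycle_def[abs_def] by (intro lin_DI[OF vsH] LH)+

lemma sigma_D:
  fixes sV :: "'f \<Rightarrow> 'v::ab_group_add \<Rightarrow> 'v"
  assumes vs: "vector_space sV" and b: "bil sc sV G"
  shows "tsum (\<Delta> (\<sigma> a)) G = tsum (\<Delta> a) (\<lambda>u v. G (\<sigma> u) (\<sigma> v))"
proof -
  note L = lin_compI[OF bilD1[OF b]] lin_compI[OF bilD2[OF b]] LH lin_tsum_fun_vs[OF vs] lin_DI[OF vs]
  have g: "lin sc sV (\<lambda>z. tsum (\<Delta> z) G)" by (rule lin_D[OF vs b])
  have "tsum (\<Delta> (\<sigma> a)) G = tsum (\<Delta> a) (\<lambda>u v. tsum (\<Delta> (B1 u * S (B2 v))) G)"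
    unfolding cocycle_def by (simp add: lin_tsum_pull[OF g])
  also have "\<dots> = tsum (\<Delta> a) (\<lambda>u v. tsum (\<Delta> u) (\<lambda>a b. tsum (\<Delta> v) (\<lambda>c d. G (B1 a * S (B2 c)) (B1 b * S (B2 d)))))"
  proof (rule tsum_cong)
    fix u v
    have "tsum (\<Delta> (B1 u * S (B2 v))) G = tsum (\<Delta> (B1 u)) (\<lambda>p q. tsum (\<Delta> (S (B2 v))) (\<lambda>p' q'. G (p * p') (q * q')))"
      by (rule multD[OF vs b])
    also have "\<dots> = tsum (\<Delta> u) (\<lambda>a b. tsum (\<Delta> (S (B2 v))) (\<lambda>p' q'. G (B1 a * p') (B1 b * q')))"
      by (rule homD[OF vs _ hom1]) (intro L)+
    also have "\<dots> = tsum (\<Delta> u) (\<lambda>a b. tsum (\<Delta> v) (\<lambda>c d. G (B1 a * S (B2 c)) (B1 b * S (B2 d))))"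
    proof (rule tsum_cong)
      fix a b
      have bb: "bil sc sV (\<lambda>p' q'. G (B1 a * p') (B1 b * q'))" by (intro L)+
      have bb2: "bil sc sV (\<lambda>p' q'. G (B1 a * S p') (B1 b * S q'))" by (intro L)+
      show "tsum (\<Delta> (S (B2 v))) (\<lambda>p' q'. G (B1 a * p') (B1 b * q')) = tsum (\<Delta> v) (\<lambda>c d. G (B1 a * S (B2 c)) (B1 b * S (B2 d)))"
        by (simp add: antipode_D[OF vs bb] homD[OF vs bb2 hom2])
    qed
    finally show "tsum (\<Delta> (B1 u * S (B2 v))) G = tsum (\<Delta> u) (\<lambda>a b. tsum (\<Delta> v) (\<lambda>c d. G (B1 a * S (B2 c)) (B1 b * S (B2 d))))" .
  qed
  also have "\<dots> = tsum (\<Delta> a) (\<lambda>u v. tsum (\<Delta> u) (\<lambda>a c. tsum (\<Delta> v) (\<lambda>b d. G (B1 a * S (B2 c)) (B1 b * S (B2 d)))))"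
    by (rule Sw4[OF vs]) (intro L)+
  also have "\<dots> = tsum (\<Delta> a) (\<lambda>u v. G (\<sigma> u) (\<sigma> v))"
  proof (rule tsum_cong)
    fix u v
    have "tsum (\<Delta> u) (\<lambda>a c. tsum (\<Delta> v) (\<lambda>b d. G (B1 a * S (B2 c)) (B1 b * S (B2 d))))
        = tsum (\<Delta> u) (\<lambda>a c. G (B1 a * S (B2 c)) (\<sigma> v))"
      unfolding cocycle_def by (rule tsum_cong) (simp add: lin_tsum_pull[OF bilD2[OF b]])
    also have "\<dots> = G (\<sigma> u) (\<sigma> v)"
      unfolding cocycle_def[of _ _ _ _ u] by (simp add: lin_tsum_pull[OF bilD1[OF b]])
    finally show "tsum (\<Delta> u) (\<lambda>a c. tsum (\<Delta> v) (\<lambda>b d. G (B1 a * S (B2 c)) (B1 b * S (B2 d)))) = G (\<sigma> u) (\<sigma> v)" .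
  qed
  finally show ?thesis .
qed

lemma sigma_idem: "\<sigma> (\<sigma> a) = \<sigma> a"
proof -
  have bb: "bil sc sc (\<lambda>u v. B1 u * S (B2 v))" by (intro LH)+
  have "\<sigma> (\<sigma> a) = tsum (\<Delta> (\<sigma> a)) (\<lambda>u v. B1 u * S (B2 v))" by (rule cocycle_def)
  also have "\<dots> = tsum (\<Delta> a) (\<lambda>u v. B1 (\<sigma> u) * S (B2 (\<sigma> v)))" by (rule sigma_D[OF vsH bb])
  also have "\<dots> = \<sigma> a" by (simp only: B1_sigma B2_sigma) (simp add: cocycle_def)
  finally show ?thesis .
qed

lemma H1_fix: "y \<in> H1 \<Delta> S B1 B2 \<Longrightarrow> \<sigma> y = y"
  by (auto simp: H1_def sigma_idem)

end


lemma lin_extend: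
  fixes s1 :: "'f::field \<Rightarrow> 'b::ab_group_add \<Rightarrow> 'b" and s2 :: "'f \<Rightarrow> 'c::ab_group_add \<Rightarrow> 'c"
  assumes vs1: "vector_space s1" and vs2: "vector_space s2" and W: "module.subspace s1 W"
    and kadd: "\<forall>x\<in>W. \<forall>y\<in>W. k (x + y) = k x + k y"
    and kscale: "\<forall>c. \<forall>x\<in>W. k (s1 c x) = s2 c (k x)"
  shows "\<exists>g. lin s1 s2 g \<and> (\<forall>x\<in>W. g x = k x)"
proof -
  interpret V1: vector_space s1 by fact
  interpret V2: vector_space s2 by fact
  interpret VP: vector_space_pair s1 s2 by unfold_locales
  obtain Bs where Bs: "Bs \<subseteq> W" "\<not> V1.dependent Bs" "W \<subseteq> V1.span Bs" "card Bs = V1.dim W"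
    by (rule V1.basis_exists)
  obtain g where g: "Vector_Spaces.linear s1 s2 g" "\<forall>x\<in>Bs. g x = k x"
    using VP.linear_independent_extend[OF Bs(2), of k] by (elim exE conjE)
  have lg: "lin s1 s2 g" using g(1) by (simp add: linear_iff_lin)
  have "k (0 + 0) = k 0 + k 0"
    using kadd V1.subspace_0[OF W] by blast
  then have k0: "k 0 = 0" by simp
  have "x \<in> W \<and> g x = k x" if x: "x \<in> W" for x
  proof -
    from x Bs(3) have "x \<in> V1.span Bs" by blast
    then show ?thesis
    proof (induction rule: V1.span_induct)
      case base
      show ?case
      proof (rule V1.subspaceI)
        show "0 \<in> Collect (\<lambda>x. x \<in> W \<and> g x = k x)"
          using V1.subspace_0[OF W] lin_zero[OF lg] k0 by simp
      next
        fix x y assume "x \<in> Collect (\<lambda>x. x \<in> W \<and> g x = k x)" "y \<in> Collect (\<lambda>x. x \<in> W \<and> g x = k x)"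
        then show "x + y \<in> Collect (\<lambda>x. x \<in> W \<and> g x = k x)"
          using V1.subspace_add[OF W] kadd lin_add[OF lg] by simp
      next
        fix c x assume "x \<in> Collect (\<lambda>x. x \<in> W \<and> g x = k x)"
        then show "s1 c x \<in> Collect (\<lambda>x. x \<in> W \<and> g x = k x)"
          using V1.subspace_scale[OF W] kscale lin_scale[OF lg] by simp
      qed
    next
      case (step x)
      then show ?case using Bs(1) g(2) by auto
    qed
  qed
  with lg show ?thesis by blast
qed

locale RBA = RB sc \<Delta> \<epsilon> S B1 B2
  for sc :: "'f::field \<Rightarrow> 'h::ring_1 \<Rightarrow> 'h" and \<Delta> \<epsilon> S B1 B2 +
  fixes scA :: "'f \<Rightarrow> 'a::comm_ring_1 \<Rightarrow> 'a"
  assumes calg: "comm_algebra scA"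
begin

lemma vsA: "vector_space scA" using calg by (simp add: comm_algebra_def)
lemma scA_multL: "scA c (x * y) = scA c x * y" using calg by (simp add: comm_algebra_def)
lemma scA_multR: "scA c (x * y) = x * scA c y"
  using scA_multL[of c y x] by (simp add: mult.commute)

lemma lin_multR_A: "lin s1 scA F \<Longrightarrow> lin s1 scA (\<lambda>x. F x * c)"
  by (simp add: lin_def scA_multL distrib_right)
lemma lin_multL_A: "lin s1 scA F \<Longrightarrow> lin s1 scA (\<lambda>x. c * F x)"
  by (simp add: lin_def scA_multR[symmetric] distrib_left)

definition conv :: "('h \<Rightarrow> 'a) \<Rightarrow> ('h \<Rightarrow> 'a) \<Rightarrow> 'h \<Rightarrow> 'a" where
  "conv \<alpha> \<beta> x = tsum (\<Delta> x) (\<lambda>u v. \<alpha> u * \<beta> v)"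

definition e :: "'h \<Rightarrow> 'a" where "e x = scA (\<epsilon> x) 1"

lemma e_lin: "lin sc scA e"
  unfolding e_def[abs_def] by (rule lin_eps_scale[OF vsA])

lemma bil_prod: "lin sc scA \<alpha> \<Longrightarrow> lin sc scA \<beta> \<Longrightarrow> bil sc scA (\<lambda>u v. \<alpha> u * \<beta> v)"
  by (intro bilI lin_multR_A lin_multL_A) auto

lemma conv_lin: "lin sc scA \<alpha> \<Longrightarrow> lin sc scA \<beta> \<Longrightarrow> lin sc scA (conv \<alpha> \<beta>)"
  unfolding conv_def[abs_def] by (rule lin_D[OF vsA bil_prod])

lemma rep_conv:
  assumes "teq2 sc rep (\<Delta> a)" "lin sc scA \<alpha>" "lin sc scA \<beta>"
  shows "tsum rep (\<lambda>u v. \<alpha> u * \<beta> v) = conv \<alpha> \<beta> a"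
  unfolding conv_def by (rule T2[OF vsA bil_prod[OF assms(2,3)] assms(1)])

lemma conv_assoc:
  assumes a: "lin sc scA \<alpha>" and b: "lin sc scA \<beta>" and c: "lin sc scA \<gamma>"
  shows "conv (conv \<alpha> \<beta>) \<gamma> x = conv \<alpha> (conv \<beta> \<gamma>) x"
proof -
  have t: "tri sc scA (\<lambda>p q v. \<alpha> p * \<beta> q * \<gamma> v)"
    by (intro triI lin_multR_A lin_multL_A a b c)
  have "conv (conv \<alpha> \<beta>) \<gamma> x = tsum (\<Delta> x) (\<lambda>u v. tsum (\<Delta> u) (\<lambda>p q. \<alpha> p * \<beta> q * \<gamma> v))"
    unfolding conv_def by (simp add: tsum_mult_right)
  also have "\<dots> = tsum (\<Delta> x) (\<lambda>u v. tsum (\<Delta> v) (\<lambda>p q. \<alpha> u * \<beta> p * \<gamma> q))"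
    by (rule coassoc[OF vsA t])
  also have "\<dots> = conv \<alpha> (conv \<beta> \<gamma>) x"
    unfolding conv_def by (simp add: tsum_mult_left mult.assoc)
  finally show ?thesis .
qed

lemma conv_e_left: "lin sc scA \<beta> \<Longrightarrow> conv e \<beta> x = \<beta> x"
  unfolding conv_def e_def using counit1[of scA \<beta> x] by (simp add: scA_multL[symmetric])

lemma conv_e_right: "lin sc scA \<alpha> \<Longrightarrow> conv \<alpha> e x = \<alpha> x"
  unfolding conv_def e_def using counit2[of scA \<alpha> x] by (simp add: scA_multR[symmetric])

lemma conv_hom:
  assumes B: "coalg_hom sc \<Delta> \<epsilon> B" and a: "lin sc scA \<alpha>" and b: "lin sc scA \<beta>"
  shows "conv \<alpha> \<beta> (B x) = conv (\<lambda>z. \<alpha> (B z)) (\<lambda>z. \<beta> (B z)) x"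
  unfolding conv_def by (rule homD[OF vsA bil_prod[OF a b] B])

lemma char_lin: "f \<in> CharH sc scA \<Longrightarrow> lin sc scA f"
  by (simp add: CharH_def linear_iff_lin)
lemma char_mult: "f \<in> CharH sc scA \<Longrightarrow> f (x * y) = f x * f y"
  by (simp add: CharH_def)
lemma char_one: "f \<in> CharH sc scA \<Longrightarrow> f 1 = 1"
  by (simp add: CharH_def)

lemma conv_S_char:
  assumes f: "f \<in> CharH sc scA"
  shows "conv (\<lambda>z. f (S z)) f x = e x"
proof -
  have "conv (\<lambda>z. f (S z)) f x = f (tsum (\<Delta> x) (\<lambda>u v. S u * v))"
    unfolding conv_def by (simp add: lin_tsum_pull[OF char_lin[OF f]] char_mult[OF f])
  also have "\<dots> = e x" by (simp add: antiL e_def lin_scale[OF char_lin[OF f]] char_one[OF f])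
  finally show ?thesis .
qed

lemma char_conv:
  assumes f: "f \<in> CharH sc scA" and h: "h \<in> CharH sc scA"
  shows "conv f h \<in> CharH sc scA"
proof -
  have l: "lin sc scA (conv f h)" by (rule conv_lin[OF char_lin[OF f] char_lin[OF h]])
  have b: "bil sc scA (\<lambda>u v. f u * h v)" by (rule bil_prod[OF char_lin[OF f] char_lin[OF h]])
  have m: "conv f h (x * y) = conv f h x * conv f h y" for x y
  proof -
    have "conv f h x * conv f h y = tsum (\<Delta> x) (\<lambda>u v. tsum (\<Delta> y) (\<lambda>u' v'. (f u * h v) * (f u' * h v')))"
      unfolding conv_def tsum_mult_right by (rule tsum_cong) (rule tsum_mult_left)
    moreover have "conv f h (x * y) = tsum (\<Delta> x) (\<lambda>u v. tsum (\<Delta> y) (\<lambda>u' v'. (f u * f u') * (h v * h v')))"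
      unfolding conv_def by (simp add: multD[OF vsA b] char_mult[OF f] char_mult[OF h])
    ultimately show ?thesis by (simp add: mult_ac)
  qed
  have o: "conv f h 1 = 1"
    unfolding conv_def by (simp add: oneD[OF vsA b] char_one[OF f] char_one[OF h])
  show ?thesis using l m o vsH vsA by (simp add: CharH_def linear_iff_lin)
qed

lemma conv_S:
  assumes f: "f \<in> CharH sc scA" and h: "h \<in> CharH sc scA"
  shows "conv f h (S x) = conv (\<lambda>z. f (S z)) (\<lambda>z. h (S z)) x"
  unfolding conv_def by (rule antipode_D[OF vsA bil_prod[OF char_lin[OF f] char_lin[OF h]]])

lemma sigma_char:
  assumes f: "f \<in> CharH sc scA"
  shows "f (\<sigma> x) = conv (\<lambda>z. f (B1 z)) (\<lambda>z. f (S (B2 z))) x"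
  unfolding conv_def cocycle_def by (simp add: lin_tsum_pull[OF char_lin[OF f]] char_mult[OF f])

lemma H1_subspace: "module.subspace sc (H1 \<Delta> S B1 B2)"
proof -
  interpret vector_space sc by (rule vsH)
  show ?thesis
    unfolding H1_def
  proof (rule subspaceI)
    have "\<sigma> 0 = 0" by (rule lin_zero[OF sigma_lin])
    then show "0 \<in> range \<sigma>" by (metis rangeI)
  next
    fix x y assume "x \<in> range \<sigma>" "y \<in> range \<sigma>"
    then obtain a b where "x = \<sigma> a" "y = \<sigma> b" by blast
    then have "x + y = \<sigma> (a + b)" by (simp add: lin_add[OF sigma_lin])
    then show "x + y \<in> range \<sigma>" by simp
  next
    fix c x assume "x \<in> range \<sigma>"
    then obtain a where "x = \<sigma> a" by blast
    then have "sc c x = \<sigma> (sc c a)" by (simp add: lin_scale[OF sigma_lin])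
    then show "sc c x \<in> range \<sigma>" by simp
  qed
qed

end


context RBA
begin

lemma main:
  fixes f1 f2 f2inv :: "'h \<Rightarrow> 'a"
  assumes G: "(f1, f2) \<in> G_B sc scA \<Delta> \<epsilon> S B1 B2"
    and inv: "f2inv \<in> CharH1 sc scA \<Delta> S B1 B2"
    and hyp: "\<forall>a\<in>H1 \<Delta> S B1 B2. conv_H1 sc \<Delta> S B1 B2 f2 f2inv a (scA (\<epsilon> a) 1)
                           \<and> conv_H1 sc \<Delta> S B1 B2 f2inv f2 a (scA (\<epsilon> a) 1)"
  shows "\<exists>\<phi>\<in>CharH sc scA. \<forall>a\<in>H1 \<Delta> S B1 B2. conv_H1 sc \<Delta> S B1 B2 f1 f2inv a (\<phi> a)"
proof -
  define W where "W = H1 \<Delta> S B1 B2"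
  from G obtain f h where f: "f \<in> CharH sc scA" and f1eq: "\<forall>a\<in>W. f1 a = f (B1 a)"
    and hK: "h \<in> kerB sc scA \<Delta> \<epsilon> S B1 B2 B1"
    and f2rep: "\<forall>a\<in>W. conv_H1 sc \<Delta> S B1 B2 (\<lambda>x. f (B2 x)) (\<lambda>x. h (B2 x)) a (f2 a)"
    unfolding G_B_def W_def by blast
  have h: "h \<in> CharH sc scA" and hB1: "\<forall>a\<in>W. h (B1 a) = scA (\<epsilon> a) 1"
    using hK unfolding kerB_def W_def by auto
  define \<phi> where "\<phi> = conv f h"
  have \<phi>C: "\<phi> \<in> CharH sc scA" unfolding \<phi>_def by (rule char_conv[OF f h])
  have lf: "lin sc scA f" by (rule char_lin[OF f])
  have lh: "lin sc scA h" by (rule char_lin[OF h])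
  have l\<phi>: "lin sc scA \<phi>" by (rule char_lin[OF \<phi>C])
  note LL = lin_compI[OF lf] lin_compI[OF lh] lin_compI[OF l\<phi>] lin_compI[OF S_lin] lin_compI[OF B1_lin]
    lin_compI[OF B2_lin] lin_compI[OF sigma_lin] B1_lin B2_lin S_lin sigma_lin lf lh l\<phi> e_lin
  have f2eq: "f2 a = \<phi> (B2 a)" if a: "a \<in> W" for a
  proof -
    from f2rep a obtain rep where rep: "set rep \<subseteq> W \<times> W" "teq2 sc rep (\<Delta> a)"
      and v: "f2 a = tsum rep (\<lambda>u v. f (B2 u) * h (B2 v))"
      unfolding conv_H1_def W_def by blast
    have "f2 a = conv (\<lambda>x. f (B2 x)) (\<lambda>x. h (B2 x)) a"
      unfolding v by (rule rep_conv[OF rep(2)]) (intro LL)+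
    also have "\<dots> = \<phi> (B2 a)" unfolding \<phi>_def by (rule conv_hom[OF hom2 lf lh, symmetric])
    finally show ?thesis .
  qed
  have sub: "module.subspace sc W" unfolding W_def by (rule H1_subspace)
  obtain k where lk: "lin sc scA k" and keq: "\<forall>x\<in>W. k x = f2inv x"
    using lin_extend[OF vsH vsA sub, of f2inv] inv unfolding CharH1_def W_def by blast
  have reps: "\<exists>rep. set rep \<subseteq> W \<times> W \<and> teq2 sc rep (\<Delta> a) \<and> scA (\<epsilon> a) 1 = tsum rep (\<lambda>u v. f2 u * f2inv v)"
    if a: "a \<in> W" for a
    using hyp a unfolding conv_H1_def W_def by blast
  define g2 where "g2 z = \<phi> (B2 z)" for z
  define \<kappa> where "\<kappa> z = \<phi> (S (B2 z))" for z
  have lg2: "lin sc scA g2" unfolding g2_def[abs_def] by (intro LL)+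
  have l\<kappa>: "lin sc scA \<kappa>" unfolding \<kappa>_def[abs_def] by (intro LL)+
  have inv1: "conv g2 k y = e y" if y: "y \<in> W" for y
  proof -
    obtain rep where rep: "set rep \<subseteq> W \<times> W" "teq2 sc rep (\<Delta> y)"
      and v: "scA (\<epsilon> y) 1 = tsum rep (\<lambda>u v. f2 u * f2inv v)"
      using reps[OF y] by blast
    have "tsum rep (\<lambda>u v. f2 u * f2inv v) = tsum rep (\<lambda>u v. g2 u * k v)"
      by (rule tsum_cong) (use rep(1) keq f2eq in \<open>auto simp: g2_def\<close>)
    also have "\<dots> = conv g2 k y" by (rule rep_conv[OF rep(2) lg2 lk])
    finally show ?thesis using v by (simp add: e_def)
  qed
  have linv: "conv \<kappa> g2 = e"
  proof
    fix z
    have "conv \<kappa> g2 z = conv (\<lambda>z. \<phi> (S z)) \<phi> (B2 z)"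
      unfolding \<kappa>_def g2_def by (rule conv_hom[OF hom2, symmetric]) (intro LL)+
    also have "\<dots> = e (B2 z)" by (rule conv_S_char[OF \<phi>C])
    also have "\<dots> = e z" by (simp add: e_def eps_B2)
    finally show "conv \<kappa> g2 z = e z" .
  qed
  have claimA: "k y = \<kappa> y" if y: "y \<in> W" for y
  proof -
    obtain rep where rep: "set rep \<subseteq> W \<times> W" "teq2 sc rep (\<Delta> y)"
      using reps[OF y] by blast
    have "k y = conv e k y" by (rule conv_e_left[OF lk, symmetric])
    also have "\<dots> = conv (conv \<kappa> g2) k y" by (simp add: linv)
    also have "\<dots> = conv \<kappa> (conv g2 k) y" by (rule conv_assoc[OF l\<kappa> lg2 lk])
    also have "\<dots> = tsum rep (\<lambda>u v. \<kappa> u * conv g2 k v)"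
      by (rule rep_conv[OF rep(2) l\<kappa> conv_lin[OF lg2 lk], symmetric])
    also have "\<dots> = tsum rep (\<lambda>u v. \<kappa> u * e v)"
      by (rule tsum_cong) (use rep(1) inv1 in auto)
    also have "\<dots> = conv \<kappa> e y" by (rule rep_conv[OF rep(2) l\<kappa> e_lin])
    also have "\<dots> = \<kappa> y" by (rule conv_e_right[OF l\<kappa>])
    finally show ?thesis .
  qed
  have hS: "h (S (B2 y)) = h y" if y: "y \<in> W" for y
  proof -
    obtain rep where rep: "set rep \<subseteq> W \<times> W" "teq2 sc rep (\<Delta> y)"
      using reps[OF y] by blast
    have "h y = h (\<sigma> y)" using y H1_fix unfolding W_def by simp
    also have "\<dots> = conv (\<lambda>z. h (B1 z)) (\<lambda>z. h (S (B2 z))) y" by (rule sigma_char[OF h])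
    also have "\<dots> = tsum rep (\<lambda>u v. h (B1 u) * h (S (B2 v)))"
      by (rule rep_conv[OF rep(2), symmetric]) (intro LL)+
    also have "\<dots> = tsum rep (\<lambda>u v. e u * h (S (B2 v)))"
      by (rule tsum_cong) (use rep(1) hB1 in \<open>auto simp: e_def\<close>)
    also have "\<dots> = conv e (\<lambda>z. h (S (B2 z))) y"
      by (rule rep_conv[OF rep(2)]) (intro LL)+
    also have "\<dots> = h (S (B2 y))" by (rule conv_e_left) (intro LL)+
    finally show ?thesis by simp
  qed
  have \<kappa>eq: "\<kappa> = conv (\<lambda>z. f (S (B2 z))) (\<lambda>z. h (S (B2 z)))"
  proof
    fix z
    have "\<kappa> z = conv (\<lambda>z. f (S z)) (\<lambda>z. h (S z)) (B2 z)"
      unfolding \<kappa>_def \<phi>_def by (rule conv_S[OF f h])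
    also have "\<dots> = conv (\<lambda>z. f (S (B2 z))) (\<lambda>z. h (S (B2 z))) z"
      by (rule conv_hom[OF hom2]) (intro LL)+
    finally show "\<kappa> z = conv (\<lambda>z. f (S (B2 z))) (\<lambda>z. h (S (B2 z))) z" .
  qed
  have sig: "(\<lambda>z. f (\<sigma> z)) = conv (\<lambda>z. f (B1 z)) (\<lambda>z. f (S (B2 z)))"
    by (rule ext) (rule sigma_char[OF f])
  have final: "conv_H1 sc \<Delta> S B1 B2 f1 f2inv x (\<phi> x)" if x: "x \<in> W" for x
  proof -
    obtain rep where rep: "set rep \<subseteq> W \<times> W" "teq2 sc rep (\<Delta> x)"
      using reps[OF x] by blast
    have "tsum rep (\<lambda>u v. f1 u * f2inv v) = tsum rep (\<lambda>u v. f (B1 u) * \<kappa> v)"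
      by (rule tsum_cong) (use rep(1) f1eq keq claimA in auto)
    also have "\<dots> = conv (\<lambda>z. f (B1 z)) \<kappa> x"
      by (rule rep_conv[OF rep(2) _ l\<kappa>]) (intro LL)+
    also have "\<dots> = conv (\<lambda>z. f (B1 z)) (conv (\<lambda>z. f (S (B2 z))) (\<lambda>z. h (S (B2 z)))) x"
      by (simp add: \<kappa>eq)
    also have "\<dots> = conv (conv (\<lambda>z. f (B1 z)) (\<lambda>z. f (S (B2 z)))) (\<lambda>z. h (S (B2 z))) x"
      by (rule conv_assoc[symmetric]) (intro LL)+
    also have "\<dots> = conv (\<lambda>z. f (\<sigma> z)) (\<lambda>z. h (S (B2 z))) x"
      by (simp add: sig)
    also have "\<dots> = tsum rep (\<lambda>u v. f (\<sigma> u) * h (S (B2 v)))"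
      by (rule rep_conv[OF rep(2), symmetric]) (intro LL)+
    also have "\<dots> = tsum rep (\<lambda>u v. f u * h v)"
      by (rule tsum_cong) (use rep(1) hS H1_fix in \<open>auto simp: W_def\<close>)
    also have "\<dots> = \<phi> x" unfolding \<phi>_def by (rule rep_conv[OF rep(2) lf lh])
    finally show ?thesis
      unfolding conv_H1_def using rep W_def by auto
  qed
  show ?thesis using \<phi>C final unfolding W_def by blast
qed

end

theorem mainTheorem15:
  fixes sc :: "'f::field_char_0 \<Rightarrow> 'h::ring_1 \<Rightarrow> 'h"
    and \<Delta> :: "'h \<Rightarrow> ('h \<times> 'h) list" and \<epsilon> :: "'h \<Rightarrow> 'f" and S B1 B2 :: "'h \<Rightarrow> 'h"
    and scA :: "'f \<Rightarrow> 'a::comm_ring_1 \<Rightarrow> 'a"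
    and f1 f2 f2inv :: "'h \<Rightarrow> 'a"
  assumes "rota_baxter_system sc \<Delta> \<epsilon> S B1 B2"
    and "comm_algebra scA"
    and "(f1, f2) \<in> G_B sc scA \<Delta> \<epsilon> S B1 B2"
    and "f2inv \<in> CharH1 sc scA \<Delta> S B1 B2"
    and "\<forall>a\<in>H1 \<Delta> S B1 B2. conv_H1 sc \<Delta> S B1 B2 f2 f2inv a (scA (\<epsilon> a) 1)
                           \<and> conv_H1 sc \<Delta> S B1 B2 f2inv f2 a (scA (\<epsilon> a) 1)"
  shows "\<exists>\<phi>\<in>CharH sc scA. \<forall>a\<in>H1 \<Delta> S B1 B2. conv_H1 sc \<Delta> S B1 B2 f1 f2inv a (\<phi> a)"
proof -
  interpret RBA sc \<Delta> \<epsilon> S B1 B2 scA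
    using assms(1,2) unfolding rota_baxter_system_def
    by unfold_locales auto
  show ?thesis by (rule main[OF assms(3,4,5)])
qed

end
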